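(* A finite Boolean inverse monoid is fundamental if and only if its groupoid of atoms is principal.
   Context: An inverse semigroup is a semigroup in which each $s$ has a unique $s^{-1}$ with $s=ss^{-1}s$, $s^{-1}=s^{-1}ss^{-1}$; natural partial order $s\le t$ iff $s=ts^{-1}s$; $a,b$ are compatible if $a^{-1}b,ab^{-1}$ are idempotents. A Boolean inverse monoid is an inverse monoid with zero in which finite compatible subsets have joins with respect to $\le$, multiplication distributes over them, and the idempotents form a Boolean algebra. An inverse semigroup $S$ is fundamental if every element commuting with all idempotents of $S$ is itself an idempotent. An atom is a non-zero element $s$ with $t\le s\Rightarrow t\in\{0,s\}$; the atoms form a groupoid under the restricted product $x\cdot y=xy$, defined when $x^{-1}x=yy^{-1}$. A groupoid is principal if for any identities $e,f$ there is at most one arrow from $e$ to $f$. *)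

theory Defs
  imports Main
begin

definition inverse_semigroup :: "('a \<Rightarrow> 'a \<Rightarrow> 'a) \<Rightarrow> bool" where
  "inverse_semigroup mul \<longleftrightarrow>
     (\<forall>a b c. mul (mul a b) c = mul a (mul b c)) \<and>
     (\<forall>s. \<exists>!t. s = mul (mul s t) s \<and> t = mul (mul t s) t)"

definition sinv :: "('a \<Rightarrow> 'a \<Rightarrow> 'a) \<Rightarrow> 'a \<Rightarrow> 'a" where
  "sinv mul s = (THE t. s = mul (mul s t) s \<and> t = mul (mul t s) t)"

definition idem :: "('a \<Rightarrow> 'a \<Rightarrow> 'a) \<Rightarrow> 'a \<Rightarrow> bool" where
  "idem mul e \<longleftrightarrow> mul e e = e"

definition nleq :: "('a \<Rightarrow> 'a \<Rightarrow> 'a) \<Rightarrow> 'a \<Rightarrow> 'a \<Rightarrow> bool" where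
  "nleq mul s t \<longleftrightarrow> s = mul t (mul (sinv mul s) s)"

definition compatible :: "('a \<Rightarrow> 'a \<Rightarrow> 'a) \<Rightarrow> 'a \<Rightarrow> 'a \<Rightarrow> bool" where
  "compatible mul a b \<longleftrightarrow> idem mul (mul (sinv mul a) b) \<and> idem mul (mul a (sinv mul b))"

definition compatible_set :: "('a \<Rightarrow> 'a \<Rightarrow> 'a) \<Rightarrow> 'a set \<Rightarrow> bool" where
  "compatible_set mul A \<longleftrightarrow> (\<forall>a\<in>A. \<forall>b\<in>A. compatible mul a b)"

definition is_lub_in :: "('a \<Rightarrow> 'a \<Rightarrow> bool) \<Rightarrow> 'a set \<Rightarrow> 'a set \<Rightarrow> 'a \<Rightarrow> bool" where
  "is_lub_in le X A j \<longleftrightarrow> j \<in> X \<and> (\<forall>a\<in>A. le a j) \<and> (\<forall>u\<in>X. (\<forall>a\<in>A. le a u) \<longrightarrow> le j u)"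

definition is_glb_in :: "('a \<Rightarrow> 'a \<Rightarrow> bool) \<Rightarrow> 'a set \<Rightarrow> 'a set \<Rightarrow> 'a \<Rightarrow> bool" where
  "is_glb_in le X A m \<longleftrightarrow> m \<in> X \<and> (\<forall>a\<in>A. le m a) \<and> (\<forall>u\<in>X. (\<forall>a\<in>A. le u a) \<longrightarrow> le u m)"

definition lub_in :: "('a \<Rightarrow> 'a \<Rightarrow> bool) \<Rightarrow> 'a set \<Rightarrow> 'a \<Rightarrow> 'a \<Rightarrow> 'a" where
  "lub_in le X x y = (THE j. is_lub_in le X {x, y} j)"

definition glb_in :: "('a \<Rightarrow> 'a \<Rightarrow> bool) \<Rightarrow> 'a set \<Rightarrow> 'a \<Rightarrow> 'a \<Rightarrow> 'a" where
  "glb_in le X x y = (THE m. is_glb_in le X {x, y} m)"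

definition boolean_algebra_on :: "'a set \<Rightarrow> ('a \<Rightarrow> 'a \<Rightarrow> bool) \<Rightarrow> bool" where
  "boolean_algebra_on X le \<longleftrightarrow>
     (\<forall>x\<in>X. le x x) \<and>
     (\<forall>x\<in>X. \<forall>y\<in>X. le x y \<and> le y x \<longrightarrow> x = y) \<and>
     (\<forall>x\<in>X. \<forall>y\<in>X. \<forall>z\<in>X. le x y \<and> le y z \<longrightarrow> le x z) \<and>
     (\<exists>bot\<in>X. \<exists>top\<in>X. (\<forall>x\<in>X. le bot x \<and> le x top) \<and>
       (\<forall>x\<in>X. \<forall>y\<in>X. (\<exists>j. is_lub_in le X {x, y} j) \<and> (\<exists>m. is_glb_in le X {x, y} m)) \<and>
       (\<forall>x\<in>X. \<forall>y\<in>X. \<forall>z\<in>X.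
          glb_in le X x (lub_in le X y z) = lub_in le X (glb_in le X x y) (glb_in le X x z)) \<and>
       (\<forall>x\<in>X. \<exists>y\<in>X. glb_in le X x y = bot \<and> lub_in le X x y = top))"

definition boolean_inverse_monoid :: "('a \<Rightarrow> 'a \<Rightarrow> 'a) \<Rightarrow> 'a \<Rightarrow> 'a \<Rightarrow> bool" where
  "boolean_inverse_monoid mul one z \<longleftrightarrow>
     inverse_semigroup mul \<and>
     (\<forall>s. mul one s = s \<and> mul s one = s) \<and>
     (\<forall>s. mul z s = z \<and> mul s z = z) \<and>
     (\<forall>A. finite A \<and> compatible_set mul A \<longrightarrow> (\<exists>j. is_lub_in (nleq mul) UNIV A j)) \<and>
     (\<forall>A j s. finite A \<and> compatible_set mul A \<and> is_lub_in (nleq mul) UNIV A j \<longrightarrow>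
        is_lub_in (nleq mul) UNIV ((\<lambda>a. mul s a) ` A) (mul s j) \<and>
        is_lub_in (nleq mul) UNIV ((\<lambda>a. mul a s) ` A) (mul j s)) \<and>
     boolean_algebra_on {e. idem mul e} (nleq mul)"

definition fundamental :: "('a \<Rightarrow> 'a \<Rightarrow> 'a) \<Rightarrow> bool" where
  "fundamental mul \<longleftrightarrow>
     (\<forall>s. (\<forall>e. idem mul e \<longrightarrow> mul s e = mul e s) \<longrightarrow> idem mul s)"

definition is_atom :: "('a \<Rightarrow> 'a \<Rightarrow> 'a) \<Rightarrow> 'a \<Rightarrow> 'a \<Rightarrow> bool" where
  "is_atom mul z s \<longleftrightarrow> s \<noteq> z \<and> (\<forall>t. nleq mul t s \<longrightarrow> t = z \<or> t = s)"

text \<open>Groupoid of atoms: arrows are the atoms, an atom x goes from its domain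
  identity x^{-1}x to its range identity x x^{-1}; the product x\<cdot>y = xy is
  defined when x^{-1}x = y y^{-1}.\<close>
definition atom_groupoid_principal :: "('a \<Rightarrow> 'a \<Rightarrow> 'a) \<Rightarrow> 'a \<Rightarrow> bool" where
  "atom_groupoid_principal mul z \<longleftrightarrow>
     (\<forall>x y. is_atom mul z x \<and> is_atom mul z y \<and>
        mul (sinv mul x) x = mul (sinv mul y) y \<and>
        mul x (sinv mul x) = mul y (sinv mul y) \<longrightarrow> x = y)"

end

theory Submission
  imports Defs
begin


locale invsg =
  fixes mul :: "'a \<Rightarrow> 'a \<Rightarrow> 'a" (infixl "\<cdot>" 70)
  assumes isg: "inverse_semigroup mul"
begin

abbreviation iv where "iv \<equiv> sinv mul"

lemma assoc [simp]: "(a \<cdot> b) \<cdot> c = a \<cdot> (b \<cdot> c)"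
  using isg unfolding inverse_semigroup_def by blast

lemma ex1: "\<exists>!t. s = s \<cdot> t \<cdot> s \<and> t = t \<cdot> s \<cdot> t"
  using isg unfolding inverse_semigroup_def by blast

lemma iv_prop: "s = s \<cdot> iv s \<cdot> s \<and> iv s = iv s \<cdot> s \<cdot> iv s"
  unfolding sinv_def by (rule theI'[OF ex1])

lemma inv1 [simp]: "s \<cdot> (iv s \<cdot> s) = s" using iv_prop by (metis assoc)
lemma inv2 [simp]: "iv s \<cdot> (s \<cdot> iv s) = iv s" using iv_prop by (metis assoc)

lemma inv_unique: "s \<cdot> (t \<cdot> s) = s \<Longrightarrow> t \<cdot> (s \<cdot> t) = t \<Longrightarrow> iv s = t"
  using ex1[of s] iv_prop[of s] by (metis assoc)

lemma idem_prod:
  assumes e: "e \<cdot> e = e" and f: "f \<cdot> f = f"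
  shows "(e \<cdot> f) \<cdot> (e \<cdot> f) = e \<cdot> f"
proof -
  define x where "x = iv (e \<cdot> f)"
  have x1: "e \<cdot> f \<cdot> x \<cdot> (e \<cdot> f) = e \<cdot> f" and x2: "x \<cdot> (e \<cdot> f) \<cdot> x = x"
    using iv_prop[of "e \<cdot> f"] x_def by auto
  define y where "y = f \<cdot> x \<cdot> e"
  have "(e \<cdot> f) \<cdot> (y \<cdot> (e \<cdot> f)) = e \<cdot> f"
    unfolding y_def using x1 e f by (metis assoc)
  moreover have "y \<cdot> ((e \<cdot> f) \<cdot> y) = y"
    unfolding y_def using x2 e f by (metis assoc)
  ultimately have "iv (e \<cdot> f) = y" by (rule inv_unique)
  hence xy: "x = y" using x_def by simp
  have xx: "x \<cdot> x = x" 
  proof -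
    have "x \<cdot> x = y \<cdot> y" using xy by simp
    also have "\<dots> = f \<cdot> (x \<cdot> (e \<cdot> f) \<cdot> x) \<cdot> e" unfolding y_def by simp
    also have "\<dots> = f \<cdot> x \<cdot> e" using x2 by simp
    also have "\<dots> = x" using xy y_def by simp
    finally show ?thesis .
  qed
  have "iv x = x" using inv_unique[of x x] xx by simp
  moreover have "iv x = e \<cdot> f" using inv_unique[of x "e \<cdot> f"] x1 x2 by (metis assoc)
  ultimately have "e \<cdot> f = x" by simp
  thus ?thesis using xx by simp
qed

lemma idem_comm:
  assumes e: "e \<cdot> e = e" and f: "f \<cdot> f = f"
  shows "e \<cdot> f = f \<cdot> e"
proof -
  have a: "(e \<cdot> f) \<cdot> (e \<cdot> f) = e \<cdot> f" by (rule idem_prod[OF e f])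
  have b: "(f \<cdot> e) \<cdot> (f \<cdot> e) = f \<cdot> e" by (rule idem_prod[OF f e])
  have "iv (e \<cdot> f) = e \<cdot> f" using inv_unique[of "e \<cdot> f" "e \<cdot> f"] a by (metis assoc)
  moreover have "iv (e \<cdot> f) = f \<cdot> e"
    apply (rule inv_unique) using a b e f by (metis assoc)+
  ultimately show ?thesis by simp
qed

lemma iv_iv [simp]: "iv (iv s) = s"
  apply (rule inv_unique) using inv1 inv2 by (metis assoc)+

lemma idem_iv: "e \<cdot> e = e \<Longrightarrow> iv e = e"
  by (rule inv_unique) simp_all

lemma idem_ivl: "iv s \<cdot> s \<cdot> (iv s \<cdot> s) = iv s \<cdot> s"
  using inv1 by (metis assoc)
lemma idem_ivr: "s \<cdot> iv s \<cdot> (s \<cdot> iv s) = s \<cdot> iv s"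
  using inv1 by (metis assoc)
lemma idem_ivl' [simp]: "iv s \<cdot> (s \<cdot> (iv s \<cdot> s)) = iv s \<cdot> s"
  using inv1 by (metis assoc)
lemma idem_ivr' [simp]: "s \<cdot> (iv s \<cdot> (s \<cdot> iv s)) = s \<cdot> iv s"
  using inv1 by (metis assoc)
lemma inv1' [simp]: "s \<cdot> (iv s \<cdot> (s \<cdot> t)) = s \<cdot> t"
  using inv1 by (metis assoc)
lemma inv2' [simp]: "iv s \<cdot> (s \<cdot> (iv s \<cdot> t)) = iv s \<cdot> t"
  using inv2 by (metis assoc)

lemma iv_mul: "iv (a \<cdot> b) = iv b \<cdot> iv a"
proof (rule inv_unique)
  have c: "(a' \<cdot> a) \<cdot> (b \<cdot> b') = (b \<cdot> b') \<cdot> (a' \<cdot> a)" if "a' = iv a" "b' = iv b" for a' b'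
    using idem_comm[OF idem_ivl idem_ivr] that by simp
  show "a \<cdot> b \<cdot> (iv b \<cdot> iv a \<cdot> (a \<cdot> b)) = a \<cdot> b"
  proof -
    have "a \<cdot> b \<cdot> (iv b \<cdot> iv a \<cdot> (a \<cdot> b)) = a \<cdot> ((b \<cdot> iv b) \<cdot> (iv a \<cdot> a)) \<cdot> b" by simp
    also have "\<dots> = a \<cdot> ((iv a \<cdot> a) \<cdot> (b \<cdot> iv b)) \<cdot> b" using c by simp
    also have "\<dots> = a \<cdot> b" using inv1 by (metis assoc)
    finally show ?thesis .
  qed
  show "iv b \<cdot> iv a \<cdot> (a \<cdot> b \<cdot> (iv b \<cdot> iv a)) = iv b \<cdot> iv a"
  proof -
    have "iv b \<cdot> iv a \<cdot> (a \<cdot> b \<cdot> (iv b \<cdot> iv a)) = iv b \<cdot> ((iv a \<cdot> a) \<cdot> (b \<cdot> iv b)) \<cdot> iv a" by simp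
    also have "\<dots> = iv b \<cdot> ((b \<cdot> iv b) \<cdot> (iv a \<cdot> a)) \<cdot> iv a" using c by simp
    also have "\<dots> = iv b \<cdot> iv a" using inv2 by (metis assoc)
    finally show ?thesis .
  qed
qed


lemma nleq_iff: "nleq mul s t \<longleftrightarrow> (\<exists>d. d \<cdot> d = d \<and> s = t \<cdot> d)"
proof
  assume "nleq mul s t" thus "\<exists>d. d \<cdot> d = d \<and> s = t \<cdot> d"
    unfolding nleq_def by (intro exI[of _ "iv s \<cdot> s"]) auto
next
  assume "\<exists>d. d \<cdot> d = d \<and> s = t \<cdot> d"
  then obtain d where d: "d \<cdot> d = d" and s: "s = t \<cdot> d" by blast
  have "iv s \<cdot> s = d \<cdot> (iv t \<cdot> t) \<cdot> d" using s iv_mul idem_iv[OF d] by simp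
  hence "t \<cdot> (iv s \<cdot> s) = t \<cdot> ((iv t \<cdot> t) \<cdot> d) \<cdot> d" using idem_comm[OF d idem_ivl[of t]] by simp
  also have "\<dots> = s" using s d inv1[of t] by (metis assoc)
  finally show "nleq mul s t" unfolding nleq_def by simp
qed

lemma nleq_refl: "nleq mul s s" unfolding nleq_def using inv1 by simp

lemma nleq_trans: "nleq mul s t \<Longrightarrow> nleq mul t u \<Longrightarrow> nleq mul s u"
proof -
  assume "nleq mul s t" "nleq mul t u"
  then obtain d1 d2 where "d1 \<cdot> d1 = d1" "s = t \<cdot> d1" "d2 \<cdot> d2 = d2" "t = u \<cdot> d2"
    unfolding nleq_iff by blast
  thus ?thesis unfolding nleq_iff
    by (intro exI[of _ "d2 \<cdot> d1"]) (auto simp: idem_prod[simplified])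
qed

lemma nleq_antisym: "nleq mul s t \<Longrightarrow> nleq mul t s \<Longrightarrow> s = t"
proof -
  assume a: "nleq mul s t" "nleq mul t s"
  define d where "d = iv s \<cdot> s"
  define D where "D = iv t \<cdot> t"
  have s: "s = t \<cdot> d" and t: "t = s \<cdot> D" using a unfolding nleq_def d_def D_def by auto
  have dd: "d \<cdot> d = d" and DD: "D \<cdot> D = D" unfolding d_def D_def by simp_all
  have "d = d \<cdot> D \<cdot> d" using s d_def D_def iv_mul idem_iv[OF dd] by (metis assoc)
  hence 1: "d = d \<cdot> D" using idem_comm[OF dd DD] dd by (metis assoc)
  have "D = D \<cdot> d \<cdot> D" using t d_def D_def iv_mul idem_iv[OF DD] by (metis assoc)
  hence 2: "D = D \<cdot> d" using idem_comm[OF dd DD] DD by (metis assoc)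
  have "d = D" using 1 2 idem_comm[OF dd DD] by simp
  thus ?thesis using s t D_def inv1 by (metis)
qed

lemma nleq_idem: "t \<cdot> t = t \<Longrightarrow> nleq mul s t \<Longrightarrow> s \<cdot> s = s"
  unfolding nleq_iff using idem_prod by (metis assoc)

lemma nleq_idem_iff: "e \<cdot> e = e \<Longrightarrow> f \<cdot> f = f \<Longrightarrow> nleq mul e f \<longleftrightarrow> e = f \<cdot> e"
  unfolding nleq_def using idem_iv by simp

lemma lub_unique: "is_lub_in (nleq mul) X A j1 \<Longrightarrow> is_lub_in (nleq mul) X A j2 \<Longrightarrow> j1 = j2"
  unfolding is_lub_in_def using nleq_antisym by blast

lemma glb_unique: "is_glb_in (nleq mul) X A j1 \<Longrightarrow> is_glb_in (nleq mul) X A j2 \<Longrightarrow> j1 = j2"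
  unfolding is_glb_in_def using nleq_antisym by blast

end




locale bim = invsg +
  fixes one z
  assumes bim: "boolean_inverse_monoid mul one z"
begin

lemma bim_parts:
  shows "\<forall>s. one \<cdot> s = s \<and> s \<cdot> one = s"
    and "\<forall>s. z \<cdot> s = z \<and> s \<cdot> z = z"
    and "\<forall>A. finite A \<and> compatible_set mul A \<longrightarrow> (\<exists>j. is_lub_in (nleq mul) UNIV A j)"
    and "\<forall>A j s. finite A \<and> compatible_set mul A \<and> is_lub_in (nleq mul) UNIV A j \<longrightarrow>
        is_lub_in (nleq mul) UNIV ((\<lambda>a. s \<cdot> a) ` A) (s \<cdot> j) \<and>
        is_lub_in (nleq mul) UNIV ((\<lambda>a. a \<cdot> s) ` A) (j \<cdot> s)"
    and ba: "boolean_algebra_on {e. idem mul e} (nleq mul)"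
proof -
  note b = bim[unfolded boolean_inverse_monoid_def]
  show "\<forall>s. one \<cdot> s = s \<and> s \<cdot> one = s" using b by (rule conjunct2[THEN conjunct1])
  show "\<forall>s. z \<cdot> s = z \<and> s \<cdot> z = z" using b by (rule conjunct2[THEN conjunct2, THEN conjunct1])
  show "\<forall>A. finite A \<and> compatible_set mul A \<longrightarrow> (\<exists>j. is_lub_in (nleq mul) UNIV A j)"
    using b by (rule conjunct2[THEN conjunct2, THEN conjunct2, THEN conjunct1])
  show "\<forall>A j s. finite A \<and> compatible_set mul A \<and> is_lub_in (nleq mul) UNIV A j \<longrightarrow>
        is_lub_in (nleq mul) UNIV ((\<lambda>a. s \<cdot> a) ` A) (s \<cdot> j) \<and>
        is_lub_in (nleq mul) UNIV ((\<lambda>a. a \<cdot> s) ` A) (j \<cdot> s)"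
    using b by (rule conjunct2[THEN conjunct2, THEN conjunct2, THEN conjunct2, THEN conjunct1])
  show "boolean_algebra_on {e. idem mul e} (nleq mul)"
    using b by (rule conjunct2[THEN conjunct2, THEN conjunct2, THEN conjunct2, THEN conjunct2])
qed

lemma one_l [simp]: "one \<cdot> s = s" and one_r [simp]: "s \<cdot> one = s"
  and z_l [simp]: "z \<cdot> s = z" and z_r [simp]: "s \<cdot> z = z"
  using bim_parts(1,2) by blast+

lemma join_ex: "finite A \<Longrightarrow> compatible_set mul A \<Longrightarrow> \<exists>j. is_lub_in (nleq mul) UNIV A j"
  using bim_parts(3) by blast

lemma distrib: "finite A \<Longrightarrow> compatible_set mul A \<Longrightarrow> is_lub_in (nleq mul) UNIV A j \<Longrightarrow>
        is_lub_in (nleq mul) UNIV ((\<lambda>a. s \<cdot> a) ` A) (s \<cdot> j) \<and>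
        is_lub_in (nleq mul) UNIV ((\<lambda>a. a \<cdot> s) ` A) (j \<cdot> s)"
  using bim_parts(4) by blast

lemma iv_z [simp]: "iv z = z" using idem_iv[of z] by simp

lemma z_le: "nleq mul z s" unfolding nleq_def by simp

lemma idem_le_one: "e \<cdot> e = e \<Longrightarrow> nleq mul e one"
  using nleq_idem_iff[of e one] by simp

lemma le_one_idem: "nleq mul s one \<Longrightarrow> s \<cdot> s = s"
  using nleq_idem[of one s] by simp

lemma compat_idem: assumes e: "e \<cdot> e = e" and f: "f \<cdot> f = f" shows "compatible mul e f"
  unfolding compatible_def idem_def using idem_iv[OF e] idem_iv[OF f] idem_prod[OF e f] by simp

lemma lub2_idem:
  assumes e: "e \<cdot> e = e" and f: "f \<cdot> f = f"
  shows "\<exists>j. is_lub_in (nleq mul) UNIV {e, f} j \<and> j \<cdot> j = j"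
proof -
  have "compatible_set mul {e, f}" unfolding compatible_set_def
    using compat_idem[OF e e] compat_idem[OF e f] compat_idem[OF f e] compat_idem[OF f f] by simp
  hence "\<exists>j. is_lub_in (nleq mul) UNIV {e, f} j" using join_ex[of "{e, f}"] by simp
  then obtain j where j: "is_lub_in (nleq mul) UNIV {e, f} j" by (elim exE)
  have "\<forall>a\<in>{e,f}. nleq mul a one" using idem_le_one[OF e] idem_le_one[OF f] by simp
  hence "nleq mul j one" using j unfolding is_lub_in_def by simp
  hence "j \<cdot> j = j" by (rule le_one_idem)
  thus ?thesis using j by blast
qed

lemma lub_z: "is_lub_in (nleq mul) UNIV {g, z} g"
  unfolding is_lub_in_def using nleq_refl[of g] z_le[of g] by simp

lemma glb_idem:
  assumes e: "e \<cdot> e = e" and f: "f \<cdot> f = f"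
  shows "glb_in (nleq mul) {e. idem mul e} e f = e \<cdot> f"
proof -
  have ef: "(e \<cdot> f) \<cdot> (e \<cdot> f) = e \<cdot> f" by (rule idem_prod[OF e f])
  have "is_glb_in (nleq mul) {e. idem mul e} {e, f} (e \<cdot> f)"
    unfolding is_glb_in_def
  proof (intro conjI ballI impI)
    show "e \<cdot> f \<in> {e. idem mul e}" using ef by (simp add: idem_def)
    fix a assume "a \<in> {e, f}"
    have 1: "e \<cdot> f = e \<cdot> (e \<cdot> f)" using e by (metis assoc)
    have 2: "e \<cdot> f = f \<cdot> (e \<cdot> f)" using f idem_comm[OF e f] by (metis assoc)
    show "nleq mul (e \<cdot> f) a" using \<open>a \<in> {e, f}\<close> nleq_idem_iff[OF ef e] nleq_idem_iff[OF ef f] 1 2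
      by blast
  next
    fix u assume u: "u \<in> {e. idem mul e}" "\<forall>a\<in>{e, f}. nleq mul u a"
    hence uu: "u \<cdot> u = u" unfolding idem_def by simp
    have "u = e \<cdot> u" "u = f \<cdot> u" using u nleq_idem_iff[OF uu] e f by auto
    hence "u = e \<cdot> f \<cdot> u" by (metis assoc)
    thus "nleq mul u (e \<cdot> f)" using nleq_idem_iff[OF uu ef] by simp
  qed
  thus ?thesis unfolding glb_in_def using glb_unique by blast
qed

lemma complement:
  assumes e: "e \<cdot> e = e"
  shows "\<exists>c. c \<cdot> c = c \<and> e \<cdot> c = z \<and> (\<forall>j. is_lub_in (nleq mul) UNIV {e, c} j \<longrightarrow> j = one)"
proof -
  let ?X = "{e. idem mul e}"
  have BAE: "\<exists>bot\<in>?X. \<exists>top\<in>?X. (\<forall>x\<in>?X. nleq mul bot x \<and> nleq mul x top) \<and>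
       (\<forall>x\<in>?X. \<forall>y\<in>?X. (\<exists>j. is_lub_in (nleq mul) ?X {x, y} j) \<and> (\<exists>m. is_glb_in (nleq mul) ?X {x, y} m)) \<and>
       (\<forall>x\<in>?X. \<forall>y\<in>?X. \<forall>z\<in>?X.
          glb_in (nleq mul) ?X x (lub_in (nleq mul) ?X y z) = lub_in (nleq mul) ?X (glb_in (nleq mul) ?X x y) (glb_in (nleq mul) ?X x z)) \<and>
       (\<forall>x\<in>?X. \<exists>y\<in>?X. glb_in (nleq mul) ?X x y = bot \<and> lub_in (nleq mul) ?X x y = top)"
    using ba[unfolded boolean_algebra_on_def] by (rule conjunct2[THEN conjunct2, THEN conjunct2])
  then obtain bot top where bt1: "bot \<in> ?X" and bt2: "top \<in> ?X" and R:
      "(\<forall>x\<in>?X. nleq mul bot x \<and> nleq mul x top) \<and>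
       (\<forall>x\<in>?X. \<forall>y\<in>?X. (\<exists>j. is_lub_in (nleq mul) ?X {x, y} j) \<and> (\<exists>m. is_glb_in (nleq mul) ?X {x, y} m)) \<and>
       (\<forall>x\<in>?X. \<forall>y\<in>?X. \<forall>z\<in>?X.
          glb_in (nleq mul) ?X x (lub_in (nleq mul) ?X y z) = lub_in (nleq mul) ?X (glb_in (nleq mul) ?X x y) (glb_in (nleq mul) ?X x z)) \<and>
       (\<forall>x\<in>?X. \<exists>y\<in>?X. glb_in (nleq mul) ?X x y = bot \<and> lub_in (nleq mul) ?X x y = top)"
    by (elim bexE)
  have bt3: "\<forall>x\<in>?X. nleq mul bot x \<and> nleq mul x top" using R by (rule conjunct1)
  have lubs: "\<forall>x\<in>?X. \<forall>y\<in>?X. (\<exists>j. is_lub_in (nleq mul) ?X {x, y} j) \<and> (\<exists>m. is_glb_in (nleq mul) ?X {x, y} m)"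
    using R by (rule conjunct2[THEN conjunct1])
  have comp: "\<forall>x\<in>?X. \<exists>y\<in>?X. glb_in (nleq mul) ?X x y = bot \<and> lub_in (nleq mul) ?X x y = top"
    using R by (rule conjunct2[THEN conjunct2, THEN conjunct2])
  have zX: "z \<in> ?X" and oneX: "one \<in> ?X" unfolding idem_def by simp_all
  have bz: "bot = z" using bt3 zX z_le[of bot] nleq_antisym by simp
  have tone: "top = one" using bt3 oneX idem_le_one[of top] bt2 nleq_antisym by (simp add: idem_def)
  have eX: "e \<in> ?X" using e by (simp add: idem_def)
  then obtain c where c: "c \<in> ?X" "glb_in (nleq mul) ?X e c = z" "lub_in (nleq mul) ?X e c = one"
    using comp bz tone by blast
  have cc: "c \<cdot> c = c" using c by (simp add: idem_def)
  have ec: "e \<cdot> c = z" using c glb_idem[OF e cc] by simp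
  have "\<exists>j. is_lub_in (nleq mul) ?X {e, c} j" using lubs eX c(1) by simp
  then obtain j0 where j0: "is_lub_in (nleq mul) ?X {e, c} j0" by (elim exE)
  have "lub_in (nleq mul) ?X e c = j0" unfolding lub_in_def using j0 lub_unique by blast
  hence j0one: "j0 = one" using c by simp
  have "j = one" if j: "is_lub_in (nleq mul) UNIV {e, c} j" for j
  proof -
    have "nleq mul j one" using j unfolding is_lub_in_def using idem_le_one e cc by blast
    hence "j \<in> ?X" using le_one_idem by (simp add: idem_def)
    hence "is_lub_in (nleq mul) ?X {e, c} j" using j unfolding is_lub_in_def by blast
    thus ?thesis using j0 j0one lub_unique by blast
  qed
  thus ?thesis using cc ec by blast
qed

end



context bim begin

lemma down_card_less:
  assumes fin: "finite (UNIV :: 'a set)" and le: "nleq mul u t" and ne: "u \<noteq> t"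
  shows "card {x. nleq mul x u} < card {x. nleq mul x t}"
proof (rule psubset_card_mono)
  show "finite {x. nleq mul x t}" using fin by (rule finite_subset[rotated]) simp
  have "{x. nleq mul x u} \<subseteq> {x. nleq mul x t}" using le nleq_trans by blast
  moreover have "t \<in> {x. nleq mul x t}" using nleq_refl by simp
  moreover have "t \<notin> {x. nleq mul x u}" using le ne nleq_antisym by blast
  ultimately show "{x. nleq mul x u} \<subset> {x. nleq mul x t}" by blast
qed

lemma atom_below:
  assumes fin: "finite (UNIV :: 'a set)" and k: "k \<cdot> k = k" "k \<noteq> z"
  shows "\<exists>f. is_atom mul z f \<and> f \<cdot> f = f \<and> nleq mul f k"
proof -
  let ?P = "\<lambda>t. t \<cdot> t = t \<and> t \<noteq> z \<and> nleq mul t k"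
  have "?P k" using k nleq_refl by simp
  then obtain t where t: "?P t" and min: "\<And>y. ?P y \<Longrightarrow> card {x. nleq mul x t} \<le> card {x. nleq mul x y}"
    using ex_has_least_nat[of ?P k "\<lambda>t. card {x. nleq mul x t}"] by blast
  have "is_atom mul z t" unfolding is_atom_def
  proof (intro conjI allI impI)
    show "t \<noteq> z" using t by simp
    fix u assume u: "nleq mul u t"
    show "u = z \<or> u = t"
    proof (rule ccontr)
      assume "\<not> (u = z \<or> u = t)"
      hence nz: "u \<noteq> z" and nt: "u \<noteq> t" by auto
      have "u \<cdot> u = u" using nleq_idem t u by blast
      moreover have "nleq mul u k" using u t nleq_trans by blast
      ultimately have "?P u" using nz by simp
      hence "card {x. nleq mul x t} \<le> card {x. nleq mul x u}" by (rule min)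
      moreover have "card {x. nleq mul x u} < card {x. nleq mul x t}"
        by (rule down_card_less[OF fin u nt])
      ultimately show False by simp
    qed
  qed
  thus ?thesis using t by blast
qed

lemma atom_dom:
  assumes x: "is_atom mul z x" and f: "f \<cdot> f = f"
  shows "(iv x \<cdot> x) \<cdot> f = z \<or> (iv x \<cdot> x) \<cdot> f = iv x \<cdot> x"
proof -
  have "nleq mul (x \<cdot> f) x" unfolding nleq_iff using f by blast
  hence "x \<cdot> f = z \<or> x \<cdot> f = x" using x unfolding is_atom_def by blast
  thus ?thesis by (metis assoc z_r)
qed

end



context bim begin

lemma fund_imp_principal:
  assumes fund: "fundamental mul"
  shows "atom_groupoid_principal mul z"
  unfolding atom_groupoid_principal_def
proof (intro allI impI, elim conjE, rule ccontr)
  fix x y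
  assume x: "is_atom mul z x" and y: "is_atom mul z y"
    and dom: "iv x \<cdot> x = iv y \<cdot> y" and ran: "x \<cdot> iv x = y \<cdot> iv y" and xy: "x \<noteq> y"
  define e where "e = iv x \<cdot> x"
  define g where "g = iv x \<cdot> y"
  have ee: "e \<cdot> e = e" unfolding e_def by (rule idem_ivl)
  have eg: "e \<cdot> g = g" unfolding e_def g_def by simp
  have ge: "g \<cdot> e = g" unfolding g_def using dom e_def by simp
  have ivg: "iv g = iv y \<cdot> x" unfolding g_def using iv_mul by simp
  have ivge: "iv g \<cdot> e = iv g" using iv_mul[of e g] eg idem_iv[OF ee] by metis
  have eivg: "e \<cdot> iv g = iv g" using iv_mul[of g e] ge idem_iv[OF ee] by metis
  obtain c where cc: "c \<cdot> c = c" and ec: "e \<cdot> c = z" using complement[OF ee] by blast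
  have ce: "c \<cdot> e = z" using ec idem_comm[OF ee cc] by simp
  have comp: "compatible_set mul {g, c}"
    unfolding compatible_set_def
  proof (intro ballI)
    fix a b assume a: "a \<in> {g, c}" and b: "b \<in> {g, c}"
    have 1: "compatible mul g g" unfolding compatible_def idem_def using idem_ivl idem_ivr by simp
    have 2: "compatible mul c c" by (rule compat_idem[OF cc cc])
    have "iv g \<cdot> c = (iv g \<cdot> e) \<cdot> c" by (simp only: ivge)
    also have "\<dots> = z" using ec by simp
    finally have "iv g \<cdot> c = z" .
    moreover have "g \<cdot> iv c = z"
    proof -
      have "g \<cdot> iv c = (g \<cdot> e) \<cdot> c" by (simp only: ge idem_iv[OF cc])
      also have "\<dots> = z" using ec by simp
      finally show ?thesis .
    qed
    ultimately have 3: "compatible mul g c" unfolding compatible_def idem_def by simp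
    have "iv c \<cdot> g = c \<cdot> (e \<cdot> g)" by (simp only: eg idem_iv[OF cc])
    also have "\<dots> = z" using ce by (simp del: assoc add: assoc[symmetric])
    finally have "iv c \<cdot> g = z" .
    moreover have "c \<cdot> iv g = z"
    proof -
      have "c \<cdot> iv g = c \<cdot> (e \<cdot> iv g)" by (simp only: eivg)
      also have "\<dots> = z" using ce by (simp del: assoc add: assoc[symmetric])
      finally show ?thesis .
    qed
    ultimately have 4: "compatible mul c g" unfolding compatible_def idem_def by simp
    show "compatible mul a b" using a b 1 2 3 4 by blast
  qed
  have fin2: "finite {g, c}" by simp
  have "\<exists>j. is_lub_in (nleq mul) UNIV {g, c} j" by (rule join_ex[OF fin2 comp])
  then obtain s where s: "is_lub_in (nleq mul) UNIV {g, c} s" by (elim exE)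
  have "\<forall>f. idem mul f \<longrightarrow> s \<cdot> f = f \<cdot> s"
  proof (intro allI impI)
    fix f assume "idem mul f"
    hence ff: "f \<cdot> f = f" unfolding idem_def .
    have L: "is_lub_in (nleq mul) UNIV {f \<cdot> g, f \<cdot> c} (f \<cdot> s)"
      using distrib[OF fin2 comp s, of f] by simp
    have R: "is_lub_in (nleq mul) UNIV {g \<cdot> f, c \<cdot> f} (s \<cdot> f)"
      using distrib[OF fin2 comp s, of f] by simp
    have fc: "f \<cdot> c = c \<cdot> f" by (rule idem_comm[OF ff cc])
    have ef: "e \<cdot> f = f \<cdot> e" by (rule idem_comm[OF ee ff])
    have "e \<cdot> f = z \<or> e \<cdot> f = e" using atom_dom[OF x ff] e_def by simp
    hence fg: "f \<cdot> g = g \<cdot> f"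
    proof
      assume "e \<cdot> f = z"
      hence fe: "f \<cdot> e = z" using ef by simp
      have "f \<cdot> g = f \<cdot> (e \<cdot> g)" by (simp only: eg)
      also have "\<dots> = z" using fe by (simp del: assoc add: assoc[symmetric])
      finally have 1: "f \<cdot> g = z" .
      have "g \<cdot> f = (g \<cdot> e) \<cdot> f" by (simp only: ge)
      also have "\<dots> = z" using \<open>e \<cdot> f = z\<close> by simp
      finally show ?thesis using 1 by simp
    next
      assume "e \<cdot> f = e"
      hence fe: "f \<cdot> e = e" using ef by simp
      have "f \<cdot> g = f \<cdot> (e \<cdot> g)" by (simp only: eg)
      also have "\<dots> = e \<cdot> g" using fe by (simp del: assoc add: assoc[symmetric])
      finally have 1: "f \<cdot> g = g" using eg by simp
      have "g \<cdot> f = (g \<cdot> e) \<cdot> f" by (simp only: ge)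
      also have "\<dots> = g \<cdot> e" using \<open>e \<cdot> f = e\<close> by simp
      finally show ?thesis using 1 ge by simp
    qed
    have "{f \<cdot> g, f \<cdot> c} = {g \<cdot> f, c \<cdot> f}" using fg fc by simp
    hence "is_lub_in (nleq mul) UNIV {f \<cdot> g, f \<cdot> c} (s \<cdot> f)" using R by simp
    thus "s \<cdot> f = f \<cdot> s" using L lub_unique by blast
  qed
  hence "idem mul s" using fund unfolding fundamental_def by blast
  hence ss: "s \<cdot> s = s" unfolding idem_def .
  have "is_lub_in (nleq mul) UNIV {g \<cdot> e, c \<cdot> e} (s \<cdot> e)"
    using distrib[OF fin2 comp s, of e] by simp
  hence "is_lub_in (nleq mul) UNIV {g, z} (s \<cdot> e)" using ge ce by simp
  hence "s \<cdot> e = g" using lub_z lub_unique by blast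
  hence gg: "g \<cdot> g = g" using idem_prod[OF ss ee] by simp
  have "g = iv g \<cdot> g" using idem_iv[OF gg] gg by simp
  also have "iv g \<cdot> g = e"
  proof -
    have "iv g \<cdot> g = iv y \<cdot> (x \<cdot> iv x) \<cdot> y" unfolding ivg by (simp add: g_def)
    also have "\<dots> = iv y \<cdot> (y \<cdot> iv y) \<cdot> y" by (simp only: ran)
    also have "\<dots> = iv y \<cdot> y" by simp
    finally show ?thesis using dom e_def by simp
  qed
  finally have "g = e" .
  have "x \<cdot> g = (x \<cdot> iv x) \<cdot> y" unfolding g_def by simp
  also have "\<dots> = (y \<cdot> iv y) \<cdot> y" by (simp only: ran)
  finally have "y = x \<cdot> g" by simp
  also have "\<dots> = x" using \<open>g = e\<close> e_def by simp
  finally show False using xy by simp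
qed

end



context bim begin

lemma principal_imp_fund:
  assumes fin: "finite (UNIV :: 'a set)" and pr: "atom_groupoid_principal mul z"
  shows "fundamental mul"
  unfolding fundamental_def
proof (intro allI impI)
  fix s assume "\<forall>e. idem mul e \<longrightarrow> s \<cdot> e = e \<cdot> s"
  hence comm: "\<And>f. f \<cdot> f = f \<Longrightarrow> s \<cdot> f = f \<cdot> s" unfolding idem_def by blast
  have icomm: "f \<cdot> iv s = iv s \<cdot> f" if ff: "f \<cdot> f = f" for f
  proof -
    have "iv (s \<cdot> f) = iv (f \<cdot> s)" using comm[OF ff] by simp
    thus ?thesis using iv_mul[of s f] iv_mul[of f s] idem_iv[OF ff] by simp
  qed
  define e where "e = iv s \<cdot> s"
  define r where "r = s \<cdot> iv s"
  have ee: "e \<cdot> e = e" unfolding e_def by (rule idem_ivl)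
  have rr: "r \<cdot> r = r" unfolding r_def by (rule idem_ivr)
  have "e = iv s \<cdot> r \<cdot> s" unfolding e_def r_def by simp
  also have "\<dots> = r \<cdot> iv s \<cdot> s" using icomm[OF rr] by simp
  finally have e1: "e = r \<cdot> e" unfolding e_def by simp
  have "r = s \<cdot> e \<cdot> iv s" unfolding e_def r_def by simp
  also have "\<dots> = e \<cdot> s \<cdot> iv s" using comm[OF ee] by simp
  finally have r1: "r = e \<cdot> r" unfolding r_def by simp
  have re: "r = e" using e1 r1 idem_comm[OF ee rr] by simp
  have se: "s \<cdot> e = s" unfolding e_def by simp
  have key: "s \<cdot> f = f" if fa: "is_atom mul z f" and ff: "f \<cdot> f = f" and fe: "f = e \<cdot> f" for f
  proof -
    define a where "a = s \<cdot> f"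
    have ef: "e \<cdot> f = f \<cdot> e" by (rule idem_comm[OF ee ff])
    have ivf: "iv f = f" by (rule idem_iv[OF ff])
    have dom: "iv a \<cdot> a = f"
    proof -
      have "iv a \<cdot> a = f \<cdot> (iv s \<cdot> s) \<cdot> f" unfolding a_def using iv_mul[of s f] ivf by simp
      also have "\<dots> = f \<cdot> (e \<cdot> f)" unfolding e_def by simp
      also have "\<dots> = f" using fe[symmetric] ff by simp
      finally show ?thesis .
    qed
    have ran: "a \<cdot> iv a = f"
    proof -
      have "a \<cdot> iv a = s \<cdot> (f \<cdot> f) \<cdot> iv s" unfolding a_def using iv_mul[of s f] ivf by simp
      also have "\<dots> = (s \<cdot> f) \<cdot> iv s" using ff by simp
      also have "\<dots> = (f \<cdot> s) \<cdot> iv s" using comm[OF ff] by simp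
      also have "\<dots> = f \<cdot> r" unfolding r_def by simp
      also have "\<dots> = f \<cdot> e" using re by simp
      also have "\<dots> = f" using fe ef by simp
      finally show ?thesis .
    qed
    have fz: "f \<noteq> z" using fa unfolding is_atom_def by simp
    have aatom: "is_atom mul z a" unfolding is_atom_def
    proof (intro conjI allI impI)
      show "a \<noteq> z" using dom fz by auto
      fix t assume ta: "nleq mul t a"
      define d where "d = iv t \<cdot> t"
      have dd: "d \<cdot> d = d" unfolding d_def by (rule idem_ivl)
      have t: "t = a \<cdot> d" using ta unfolding nleq_def d_def .
      have ivt: "iv t = d \<cdot> iv a" using t iv_mul[of a d] idem_iv[OF dd] by simp
      have "d = iv t \<cdot> t" unfolding d_def ..
      also have "\<dots> = d \<cdot> iv a \<cdot> (a \<cdot> d)" unfolding ivt using t by simp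
      also have "\<dots> = d \<cdot> (iv a \<cdot> a) \<cdot> d" by simp
      finally have "d = d \<cdot> (iv a \<cdot> a) \<cdot> d" .
      also have "\<dots> = d \<cdot> f \<cdot> d" using dom by simp
      also have "\<dots> = f \<cdot> d \<cdot> d" using idem_comm[OF dd ff] by simp
      also have "\<dots> = f \<cdot> d" using dd by simp
      finally have "d = f \<cdot> d" .
      hence "nleq mul d f" using nleq_idem_iff[OF dd ff] by simp
      hence "d = z \<or> d = f" using fa unfolding is_atom_def by blast
      thus "t = z \<or> t = a"
      proof
        assume "d = z" thus ?thesis using t by simp
      next
        assume "d = f" thus ?thesis using t ff unfolding a_def by simp
      qed
    qed
    have X: "is_atom mul z a \<and> is_atom mul z f \<and> iv a \<cdot> a = iv f \<cdot> f \<and> a \<cdot> iv a = f \<cdot> iv f"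
      using aatom fa dom ran ivf ff by simp
    from pr have "\<forall>x y. is_atom mul z x \<and> is_atom mul z y \<and>
        iv x \<cdot> x = iv y \<cdot> y \<and> x \<cdot> iv x = y \<cdot> iv y \<longrightarrow> x = y"
      unfolding atom_groupoid_principal_def .
    hence "a = f" using X by blast
    thus ?thesis unfolding a_def .
  qed
  let ?P = "\<lambda>h. h \<cdot> h = h \<and> nleq mul h e \<and> s \<cdot> h = h"
  have "?P z" using z_le by simp
  moreover have "\<forall>y. ?P y \<longrightarrow> card {x. nleq mul x y} < Suc (card (UNIV :: 'a set))"
  proof (intro allI impI)
    fix y
    have "card {x. nleq mul x y} \<le> card (UNIV :: 'a set)" by (rule card_mono[OF fin]) simp
    thus "card {x. nleq mul x y} < Suc (card (UNIV :: 'a set))" by simp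
  qed
  ultimately obtain h where h: "?P h" and hmax: "\<And>y. ?P y \<Longrightarrow> card {x. nleq mul x y} \<le> card {x. nleq mul x h}"
    using Lattices_Big.ex_has_greatest_nat[of ?P z "\<lambda>t. card {x. nleq mul x t}"] by blast
  have hh: "h \<cdot> h = h" and he: "nleq mul h e" and sh: "s \<cdot> h = h" using h by auto
  have heq: "h = e"
  proof (rule ccontr)
    assume hne: "h \<noteq> e"
    obtain c where cc: "c \<cdot> c = c" and hc: "h \<cdot> c = z"
      and top: "\<And>j. is_lub_in (nleq mul) UNIV {h, c} j \<Longrightarrow> j = one"
      using complement[OF hh] by blast
    obtain j where j: "is_lub_in (nleq mul) UNIV {h, c} j" using lub2_idem[OF hh cc] by blast
    have jone: "j = one" by (rule top[OF j])
    have fin2: "finite {h, c}" by simp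
    have comp2: "compatible_set mul {h, c}" unfolding compatible_set_def
      using compat_idem[OF hh hh] compat_idem[OF hh cc] compat_idem[OF cc hh] compat_idem[OF cc cc] by simp
    have eh: "e \<cdot> h = h" using he nleq_idem_iff[OF hh ee] by simp
    have L: "is_lub_in (nleq mul) UNIV {h, e \<cdot> c} e"
      using distrib[OF fin2 comp2 j, of e] jone eh by simp
    show False
    proof (cases "e \<cdot> c = z")
      case True
      hence "is_lub_in (nleq mul) UNIV {h, z} e" using L by simp
      hence "e = h" using lub_z[of h] lub_unique by blast
      thus False using hne by simp
    next
      case False
      have kk: "(e \<cdot> c) \<cdot> (e \<cdot> c) = e \<cdot> c" by (rule idem_prod[OF ee cc])
      obtain f where fa: "is_atom mul z f" and ff: "f \<cdot> f = f" and fk: "nleq mul f (e \<cdot> c)"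
        using atom_below[OF fin kk False] by blast
      have ke: "nleq mul (e \<cdot> c) e" unfolding nleq_iff using cc by blast
      have fle: "nleq mul f e" using fk ke by (rule nleq_trans)
      have fe: "f = e \<cdot> f" using fle nleq_idem_iff[OF ff ee] by simp
      have sf: "s \<cdot> f = f" by (rule key[OF fa ff fe])
      have f1: "f = e \<cdot> c \<cdot> f" using fk nleq_idem_iff[OF ff kk] by simp
      have ch: "c \<cdot> h = z" using hc idem_comm[OF hh cc] by simp
      have fh: "f \<cdot> h = z"
      proof -
        have "f \<cdot> h = e \<cdot> (c \<cdot> f) \<cdot> h" using arg_cong[OF f1, of "\<lambda>u. u \<cdot> h"] by simp
        also have "\<dots> = e \<cdot> (f \<cdot> c) \<cdot> h" using idem_comm[OF cc ff] by simp
        also have "\<dots> = e \<cdot> f \<cdot> (c \<cdot> h)" by simp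
        also have "\<dots> = z" using ch by simp
        finally show ?thesis .
      qed
      obtain h' where h': "is_lub_in (nleq mul) UNIV {h, f} h'" and hh': "h' \<cdot> h' = h'"
        using lub2_idem[OF hh ff] by blast
      have finhf: "finite {h, f}" by simp
      have comphf: "compatible_set mul {h, f}" unfolding compatible_set_def
        using compat_idem[OF hh hh] compat_idem[OF hh ff] compat_idem[OF ff hh] compat_idem[OF ff ff] by simp
      have "is_lub_in (nleq mul) UNIV {s \<cdot> h, s \<cdot> f} (s \<cdot> h')"
        using distrib[OF finhf comphf h', of s] by simp
      hence "is_lub_in (nleq mul) UNIV {h, f} (s \<cdot> h')" using sh sf by simp
      hence sh': "s \<cdot> h' = h'" using h' lub_unique by blast
      have h'e: "nleq mul h' e" using h' he fle unfolding is_lub_in_def by blast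
      have hleh': "nleq mul h h'" using h' unfolding is_lub_in_def by blast
      have flh': "nleq mul f h'" using h' unfolding is_lub_in_def by blast
      have hneh': "h \<noteq> h'"
      proof
        assume "h = h'"
        hence "nleq mul f h" using flh' by simp
        hence "f = h \<cdot> f" using nleq_idem_iff[OF ff hh] by simp
        hence "f = z" using fh idem_comm[OF hh ff] by simp
        thus False using fa unfolding is_atom_def by simp
      qed
      have "?P h'" using hh' h'e sh' by simp
      hence "card {x. nleq mul x h'} \<le> card {x. nleq mul x h}" by (rule hmax)
      moreover have "card {x. nleq mul x h} < card {x. nleq mul x h'}"
        by (rule down_card_less[OF fin hleh' hneh'])
      ultimately show False by simp
    qed
  qed
  have "s = e" using se sh heq by simp
  thus "idem mul s" unfolding idem_def using ee by simp
qed

end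

theorem mainTheorem4:
  fixes mul :: "'a \<Rightarrow> 'a \<Rightarrow> 'a" and one z :: 'a
  assumes "finite (UNIV :: 'a set)"
    and "boolean_inverse_monoid mul one z"
  shows "fundamental mul \<longleftrightarrow> atom_groupoid_principal mul z"
proof -
  have isg: "inverse_semigroup mul" using assms(2) unfolding boolean_inverse_monoid_def by (rule conjunct1)
  interpret bim mul one z
    by (rule bim.intro[OF invsg.intro[OF isg] bim_axioms.intro[OF assms(2)]])
  show ?thesis using fund_imp_principal principal_imp_fund[OF assms(1)] by blast
qed

end
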